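(* For every bounded distributive lattice $L$, the set of prime ideals of $\Phi(L)$ is $$\mathcal{I}_p(\Phi(L))=\{(I\times I)\cap \Phi(L): I\in \mathcal{I}_p(L)\}\cup\{(I\times L)\cap\Phi(L): I\in\mathcal{I}_p(L)\}.$$
   Context: All lattices are bounded distributive with $0\neq 1$. For a lattice $L$, $\Phi(L)=\{(a,b)\in L\times L : a\le b\}$, ordered coordinatewise; it is a $(0,1)$-sublattice of $L\times L$. $\mathcal{I}_p(L)$ denotes the set of prime ideals of $L$ (ideals $I\neq L$ such that $a,b\notin I$ implies $a\wedge b\notin I$). *)

theory Defs
  imports Main "HOL-Library.Product_Order"
begin

text \<open>Ideals and prime ideals of a sublattice S (carrier set) of a lattice type.
  For the whole lattice take S = UNIV.\<close>

definition lat_ideal :: "'a::lattice set \<Rightarrow> 'a set \<Rightarrow> bool" where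
  "lat_ideal S I \<longleftrightarrow> I \<subseteq> S \<and> I \<noteq> {} \<and>
     (\<forall>a\<in>I. \<forall>b\<in>S. b \<le> a \<longrightarrow> b \<in> I) \<and>
     (\<forall>a\<in>I. \<forall>b\<in>I. sup a b \<in> I)"

definition prime_ideals :: "'a::lattice set \<Rightarrow> 'a set set" where
  "prime_ideals S = {I. lat_ideal S I \<and> I \<noteq> S \<and>
     (\<forall>a\<in>S. \<forall>b\<in>S. a \<notin> I \<longrightarrow> b \<notin> I \<longrightarrow> inf a b \<notin> I)}"

definition Phi :: "'a::order set \<Rightarrow> ('a \<times> 'a) set" where
  "Phi L = {(a, b). a \<in> L \<and> b \<in> L \<and> a \<le> b}"

end

theory Submission
  imports Defs
begin

lemma phi_mem[simp]: "(a, b) \<in> Phi UNIV \<longleftrightarrow> a \<le> b"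
  by (simp add: Phi_def)

lemma diag_prime:
  fixes P :: "('a :: {bounded_lattice, distrib_lattice} \<times> 'a) set"
  assumes P: "P \<in> prime_ideals (Phi UNIV)"
  shows "{x. (x, x) \<in> P} \<in> prime_ideals UNIV"
proof -
  let ?I = "{x. (x, x) \<in> P}"
  from P have id: "lat_ideal (Phi UNIV) P" and ne: "P \<noteq> Phi UNIV"
    and pr: "\<forall>a\<in>Phi UNIV. \<forall>b\<in>Phi UNIV. a \<notin> P \<longrightarrow> b \<notin> P \<longrightarrow> inf a b \<notin> P"
    by (auto simp: prime_ideals_def)
  from id have sub: "P \<subseteq> Phi UNIV" and nem: "P \<noteq> {}"
    and dc: "\<forall>a\<in>P. \<forall>b\<in>Phi UNIV. b \<le> a \<longrightarrow> b \<in> P"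
    and sc: "\<forall>a\<in>P. \<forall>b\<in>P. sup a b \<in> P"
    by (auto simp: lat_ideal_def)
  have top: "(top, top) \<notin> P"
  proof
    assume "(top, top) \<in> P"
    then have "Phi UNIV \<subseteq> P" using dc by (auto simp: Phi_def)
    with sub ne show False by auto
  qed
  from nem obtain p where "p \<in> P" by auto
  then have "(bot, bot) \<in> P" using dc by (cases p) auto
  then have "bot \<in> ?I" by simp
  moreover have "top \<notin> ?I" using top by simp
  moreover have "\<forall>a\<in>?I. \<forall>b. b \<le> a \<longrightarrow> b \<in> ?I" using dc by auto
  moreover have "\<forall>a\<in>?I. \<forall>b\<in>?I. sup a b \<in> ?I" using sc by fastforce
  moreover have "\<forall>a b. a \<notin> ?I \<longrightarrow> b \<notin> ?I \<longrightarrow> inf a b \<notin> ?I"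
    using pr by fastforce
  ultimately show ?thesis unfolding prime_ideals_def lat_ideal_def by blast
qed

theorem mainTheorem4:
  assumes "(bot :: 'a :: {bounded_lattice, distrib_lattice}) \<noteq> top"
  shows "prime_ideals (Phi (UNIV :: 'a set)) =
     {(I \<times> I) \<inter> Phi UNIV | I. I \<in> prime_ideals (UNIV :: 'a set)} \<union>
     {(I \<times> UNIV) \<inter> Phi UNIV | I. I \<in> prime_ideals (UNIV :: 'a set)}"
proof (rule set_eqI, rule iffI)
  fix P :: "('a \<times> 'a) set"
  assume P: "P \<in> prime_ideals (Phi UNIV)"
  let ?I = "{x. (x, x) \<in> P}"
  have Ip: "?I \<in> prime_ideals UNIV" using diag_prime[OF P] .
  from P have id: "lat_ideal (Phi UNIV) P"
    and pr: "\<forall>a\<in>Phi UNIV. \<forall>b\<in>Phi UNIV. a \<notin> P \<longrightarrow> b \<notin> P \<longrightarrow> inf a b \<notin> P"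
    by (auto simp: prime_ideals_def)
  from id have sub: "P \<subseteq> Phi UNIV"
    and dc: "\<forall>a\<in>P. \<forall>b\<in>Phi UNIV. b \<le> a \<longrightarrow> b \<in> P"
    and sc: "\<forall>a\<in>P. \<forall>b\<in>P. sup a b \<in> P"
    by (auto simp: lat_ideal_def)
  show "P \<in> {(I \<times> I) \<inter> Phi UNIV | I. I \<in> prime_ideals (UNIV :: 'a set)} \<union>
     {(I \<times> UNIV) \<inter> Phi UNIV | I. I \<in> prime_ideals (UNIV :: 'a set)}"
  proof (cases "(bot, top) \<in> P")
    case True
    have "P = (?I \<times> UNIV) \<inter> Phi UNIV"
    proof (rule set_eqI)
      fix q :: "'a \<times> 'a"
      obtain a b where q: "q = (a, b)" by (cases q)
      show "q \<in> P \<longleftrightarrow> q \<in> (?I \<times> UNIV) \<inter> Phi UNIV"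
      proof
        assume "q \<in> P"
        then have "a \<le> b" "(a,b) \<in> P" using sub q by auto
        then have "(a, a) \<in> P" using dc by auto
        then show "q \<in> (?I \<times> UNIV) \<inter> Phi UNIV" using q \<open>a \<le> b\<close> by auto
      next
        assume "q \<in> (?I \<times> UNIV) \<inter> Phi UNIV"
        then have ab: "a \<le> b" "(a, a) \<in> P" using q by auto
        then have "sup (a, a) (bot, top) \<in> P" using sc True by blast
        then have "(a, top) \<in> P" by simp
        then show "q \<in> P" using dc ab q by auto
      qed
    qed
    then show ?thesis using Ip by blast
  next
    case False
    have "P = (?I \<times> ?I) \<inter> Phi UNIV"
    proof (rule set_eqI)
      fix q :: "'a \<times> 'a"
      obtain a b where q: "q = (a, b)" by (cases q)
      show "q \<in> P \<longleftrightarrow> q \<in> (?I \<times> ?I) \<inter> Phi UNIV"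
      proof
        assume "q \<in> P"
        then have ab: "a \<le> b" "(a,b) \<in> P" using sub q by auto
        then have "(a, a) \<in> P" using dc by auto
        have "(bot, b) \<in> P" using dc ab by auto
        then have "inf (b, b) (bot, top) \<in> P" by simp
        then have "(b, b) \<in> P" using pr False by fastforce
        then show "q \<in> (?I \<times> ?I) \<inter> Phi UNIV" using q ab \<open>(a,a) \<in> P\<close> by auto
      next
        assume "q \<in> (?I \<times> ?I) \<inter> Phi UNIV"
        then have ab: "a \<le> b" "(b, b) \<in> P" using q by auto
        then show "q \<in> P" using dc q by auto
      qed
    qed
    then show ?thesis using Ip by blast
  qed
next
  fix P :: "('a \<times> 'a) set"
  assume "P \<in> {(I \<times> I) \<inter> Phi UNIV | I. I \<in> prime_ideals (UNIV :: 'a set)} \<union>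
     {(I \<times> UNIV) \<inter> Phi UNIV | I. I \<in> prime_ideals (UNIV :: 'a set)}"
  then obtain I where I: "I \<in> prime_ideals (UNIV :: 'a set)"
    and P: "P = (I \<times> I) \<inter> Phi UNIV \<or> P = (I \<times> UNIV) \<inter> Phi UNIV" by blast
  from I have ne: "I \<noteq> {}" and dc: "\<forall>a\<in>I. \<forall>b. b \<le> a \<longrightarrow> b \<in> I"
    and sc: "\<forall>a\<in>I. \<forall>b\<in>I. sup a b \<in> I" and nu: "I \<noteq> UNIV"
    and pr: "\<forall>a b. a \<notin> I \<longrightarrow> b \<notin> I \<longrightarrow> inf a b \<notin> I"
    by (auto simp: prime_ideals_def lat_ideal_def)
  have bI: "bot \<in> I" using ne dc by auto
  have tI: "top \<notin> I" using nu dc by (metis UNIV_eq_I top_greatest)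
  show "P \<in> prime_ideals (Phi UNIV)"
    using P
  proof
    assume P: "P = (I \<times> I) \<inter> Phi UNIV"
    have "(bot, bot) \<in> P" using bI P by simp
    moreover have "(top, top) \<in> Phi UNIV - P" using tI P by simp
    moreover have "\<forall>a\<in>P. \<forall>b\<in>Phi UNIV. b \<le> a \<longrightarrow> b \<in> P"
    proof (intro ballI impI)
      fix a b assume "a \<in> P" "b \<in> Phi UNIV" "b \<le> a"
      then show "b \<in> P" using dc P by (cases a, cases b) auto
    qed
    moreover have "\<forall>a\<in>P. \<forall>b\<in>P. sup a b \<in> P"
    proof (intro ballI)
      fix a b assume "a \<in> P" "b \<in> P"
      then show "sup a b \<in> P" using sc P by (cases a, cases b) (auto intro: le_supI1 le_supI2)
    qed
    moreover have "\<forall>a\<in>Phi UNIV. \<forall>b\<in>Phi UNIV. a \<notin> P \<longrightarrow> b \<notin> P \<longrightarrow> inf a b \<notin> P"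
    proof (intro ballI impI)
      fix a b assume "a \<in> Phi UNIV" "b \<in> Phi UNIV" "a \<notin> P" "b \<notin> P"
      moreover obtain a1 a2 b1 b2 where "a = (a1, a2)" "b = (b1, b2)" by (cases a, cases b)
      ultimately have "a1 \<le> a2" "b1 \<le> b2" "a2 \<notin> I" "b2 \<notin> I"
        using P dc by auto
      then have "inf a2 b2 \<notin> I" using pr by blast
      then show "inf a b \<notin> P" using P \<open>a = (a1, a2)\<close> \<open>b = (b1, b2)\<close> by auto
    qed
    moreover have "P \<subseteq> Phi UNIV" using P by auto
    ultimately show ?thesis unfolding prime_ideals_def lat_ideal_def by blast
  next
    assume P: "P = (I \<times> UNIV) \<inter> Phi UNIV"
    have "(bot, bot) \<in> P" using bI P by simp
    moreover have "(top, top) \<in> Phi UNIV - P" using tI P by simp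
    moreover have "\<forall>a\<in>P. \<forall>b\<in>Phi UNIV. b \<le> a \<longrightarrow> b \<in> P"
    proof (intro ballI impI)
      fix a b assume "a \<in> P" "b \<in> Phi UNIV" "b \<le> a"
      then show "b \<in> P" using dc P by (cases a, cases b) auto
    qed
    moreover have "\<forall>a\<in>P. \<forall>b\<in>P. sup a b \<in> P"
    proof (intro ballI)
      fix a b assume "a \<in> P" "b \<in> P"
      then show "sup a b \<in> P" using sc P by (cases a, cases b) (auto intro: le_supI1 le_supI2)
    qed
    moreover have "\<forall>a\<in>Phi UNIV. \<forall>b\<in>Phi UNIV. a \<notin> P \<longrightarrow> b \<notin> P \<longrightarrow> inf a b \<notin> P"
    proof (intro ballI impI)
      fix a b assume "a \<in> Phi UNIV" "b \<in> Phi UNIV" "a \<notin> P" "b \<notin> P"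
      then show "inf a b \<notin> P" using pr P by (cases a, cases b) auto
    qed
    moreover have "P \<subseteq> Phi UNIV" using P by auto
    ultimately show ?thesis unfolding prime_ideals_def lat_ideal_def by blast
  qed
qed

end
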